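(* Let $n\ge0$. If $\Lambda\in\widetilde{\mathrm{NC}}^{\mathrm B}(n)$ has $2k+1$ blocks, then $\Lambda^+\in\widetilde{\mathrm{NC}}^{\mathrm B}(n)$ and $\Lambda^+$ has $2(n-k)+1$ blocks.
   Context: A set partition of a finite set $\mathcal X\subset\mathbb Z$ is a set of nonempty pairwise disjoint sets (blocks) with union $\mathcal X$. A pair $(i,j)$ is an arc of $\Lambda$ if $i<j$ lie in the same block and $j$ is the least element of that block greater than $i$; $\mathrm{Arc}(\Lambda)$ is the set of arcs (which with $\mathcal X$ determines $\Lambda$). Let $[\pm n]=\{\pm1,\dots,\pm n\}$. $\Pi^{\mathrm B}(n)$ is the set of partitions $\Lambda$ of $\{0\}\cup[\pm n]$ such that $(i,j)\in\mathrm{Arc}(\Lambda)$ iff $(-j,-i)\in\mathrm{Arc}(\Lambda)$. $\widetilde{\mathrm{NC}}^{\mathrm B}(n)$ is the set of $\Lambda\in\Pi^{\mathrm B}(n)$ such that whenever $(i,k),(j,l)\in\mathrm{Arc}(\Lambda)$ with $i<j<k<l$, we have $(i,k)=(-l,-j)$. For a partition $\Lambda$ of $\mathcal X$, $\Lambda^+$ is the partition of $\mathcal X$ with arc set $(\mathrm{Arc}(\Lambda)\setminus\mathcal S)\cup\mathcal T$, where $\mathcal S=\{(i,i+1):i\in\mathbb Z\}$ and $\mathcal T$ is the set of pairs $(i,i+1)\in\mathcal X\times\mathcal X$ with $i$ maximal in its block of $\Lambda$ and $i+1$ minimal in its block of $\Lambda$. *)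

theory Defs
  imports Main
begin

definition set_partition :: "int set \<Rightarrow> int set set \<Rightarrow> bool" where
  "set_partition X P \<longleftrightarrow> (\<forall>B\<in>P. B \<noteq> {}) \<and>
     (\<forall>B\<in>P. \<forall>C\<in>P. B \<noteq> C \<longrightarrow> B \<inter> C = {}) \<and> \<Union>P = X"

definition Arc :: "int set set \<Rightarrow> (int \<times> int) set" where
  "Arc P = {(i, j). \<exists>B\<in>P. i \<in> B \<and> j \<in> B \<and> i < j \<and> (\<forall>m\<in>B. i < m \<longrightarrow> j \<le> m)}"

text \<open>The partition of X whose blocks are the connected components of the graph with edge set A
  (restricted to X). If A is the arc set of some partition of X, this is that partition.\<close>
definition partition_of_arcs :: "int set \<Rightarrow> (int \<times> int) set \<Rightarrow> int set set" where
  "partition_of_arcs X A =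
     X // ((((A \<inter> (X \<times> X)) \<union> (A \<inter> (X \<times> X))\<inverse>)\<^sup>*) \<inter> (X \<times> X))"

definition pm :: "nat \<Rightarrow> int set" where
  "pm n = {i. 1 \<le> \<bar>i\<bar> \<and> \<bar>i\<bar> \<le> int n}"

definition PiB :: "nat \<Rightarrow> int set set set" where
  "PiB n = {L. set_partition ({0} \<union> pm n) L \<and>
              (\<forall>i j. (i, j) \<in> Arc L \<longleftrightarrow> (- j, - i) \<in> Arc L)}"

definition NCB :: "nat \<Rightarrow> int set set set" where
  "NCB n = {L \<in> PiB n. \<forall>i j k l. (i, k) \<in> Arc L \<and> (j, l) \<in> Arc L \<and> i < j \<and> j < k \<and> k < l
              \<longrightarrow> (i, k) = (- l, - j)}"

definition Splus :: "(int \<times> int) set" where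
  "Splus = {(i, i + 1) | i. True}"

definition Tplus :: "int set \<Rightarrow> int set set \<Rightarrow> (int \<times> int) set" where
  "Tplus X L = {(i, i + 1) | i. i \<in> X \<and> i + 1 \<in> X \<and>
      (\<exists>B\<in>L. i \<in> B \<and> (\<forall>m\<in>B. m \<le> i)) \<and> (\<exists>B\<in>L. i + 1 \<in> B \<and> (\<forall>m\<in>B. i + 1 \<le> m))}"

definition plus_op :: "int set \<Rightarrow> int set set \<Rightarrow> int set set" where
  "plus_op X L = partition_of_arcs X ((Arc L - Splus) \<union> Tplus X L)"

end

theory Submission
  imports Defs
begin


lemma sp_sub: "set_partition X P \<Longrightarrow> B \<in> P \<Longrightarrow> B \<subseteq> X"
  unfolding set_partition_def by blast
lemma sp_uniq: "set_partition X P \<Longrightarrow> B \<in> P \<Longrightarrow> C \<in> P \<Longrightarrow> x \<in> B \<Longrightarrow> x \<in> C \<Longrightarrow> B = C"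
  unfolding set_partition_def by blast
lemma sp_ex: "set_partition X P \<Longrightarrow> x \<in> X \<Longrightarrow> \<exists>B\<in>P. x \<in> B"
  unfolding set_partition_def by blast
lemma sp_ne: "set_partition X P \<Longrightarrow> B \<in> P \<Longrightarrow> B \<noteq> {}"
  unfolding set_partition_def by blast
lemma sp_fin: "finite X \<Longrightarrow> set_partition X P \<Longrightarrow> B \<in> P \<Longrightarrow> finite B"
  by (rule finite_subset[OF sp_sub])
lemma sp_finP: "finite X \<Longrightarrow> set_partition X P \<Longrightarrow> finite P"
proof -
  assume a: "finite X" "set_partition X P"
  have "P \<subseteq> Pow X" using sp_sub[OF a(2)] by blast
  then show ?thesis using a(1) finite_subset by blast
qed

lemma arc_lt: "(i, j) \<in> Arc P \<Longrightarrow> i < j"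
  unfolding Arc_def by auto
lemma arc_X: "set_partition X P \<Longrightarrow> (i, j) \<in> Arc P \<Longrightarrow> i \<in> X \<and> j \<in> X"
  unfolding Arc_def using sp_sub by blast
lemma arc_fun: assumes "set_partition X P" "(i, j) \<in> Arc P" "(i, j') \<in> Arc P" shows "j = j'"
proof -
  obtain B where B: "B\<in>P" "i \<in> B" "j \<in> B" "i < j" "\<forall>m\<in>B. i < m \<longrightarrow> j \<le> m"
    using assms(2) unfolding Arc_def by auto
  obtain C where C: "C\<in>P" "i \<in> C" "j' \<in> C" "i < j'" "\<forall>m\<in>C. i < m \<longrightarrow> j' \<le> m"
    using assms(3) unfolding Arc_def by auto
  have "B = C" using sp_uniq[OF assms(1) B(1) C(1) B(2) C(2)] .
  have "j \<le> j'" using B(5) C(3,4) \<open>B=C\<close> by blast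
  moreover have "j' \<le> j" using C(5) B(3,4) \<open>B=C\<close> by blast
  ultimately show ?thesis by simp
qed
lemma arc_inj: assumes "set_partition X P" "(i, j) \<in> Arc P" "(i', j) \<in> Arc P" shows "i = i'"
proof -
  obtain B where B: "B\<in>P" "i \<in> B" "j \<in> B" "i < j" "\<forall>m\<in>B. i < m \<longrightarrow> j \<le> m"
    using assms(2) unfolding Arc_def by auto
  obtain C where C: "C\<in>P" "i' \<in> C" "j \<in> C" "i' < j" "\<forall>m\<in>C. i' < m \<longrightarrow> j \<le> m"
    using assms(3) unfolding Arc_def by auto
  have "B = C" using sp_uniq[OF assms(1) B(1) C(1) B(3) C(3)] .
  have "\<not> i < i'"
  proof
    assume "i < i'" hence "j \<le> i'" using B(5) C(2) \<open>B=C\<close> by blast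
    thus False using C(4) by simp
  qed
  moreover have "\<not> i' < i"
  proof
    assume "i' < i" hence "j \<le> i" using C(5) B(2) \<open>B=C\<close> by blast
    thus False using B(4) by simp
  qed
  ultimately show ?thesis by simp
qed

lemma not_max_iff:
  assumes "finite X" "set_partition X P" "B \<in> P" "i \<in> B"
  shows "(\<exists>m\<in>B. i < m) \<longleftrightarrow> i \<in> Domain (Arc P)"
proof
  assume "\<exists>m\<in>B. i < m"
  let ?C = "{m\<in>B. i < m}"
  have f: "finite ?C" using sp_fin[OF assms(1-3)] by simp
  have ne: "?C \<noteq> {}" using \<open>\<exists>m\<in>B. i < m\<close> by blast
  have "Min ?C \<in> ?C" using Min_in[OF f ne] .
  moreover have "\<forall>m\<in>B. i < m \<longrightarrow> Min ?C \<le> m" using Min_le[OF f] by blast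
  ultimately have "(i, Min ?C) \<in> Arc P" unfolding Arc_def using assms(3,4) by blast
  then show "i \<in> Domain (Arc P)" by blast
next
  assume "i \<in> Domain (Arc P)"
  then obtain j B' where "B'\<in>P" "i \<in> B'" "j \<in> B'" "i < j" unfolding Arc_def by blast
  then show "\<exists>m\<in>B. i < m" using sp_uniq[OF assms(2) assms(3) \<open>B'\<in>P\<close> assms(4)] by blast
qed

lemma not_min_iff:
  assumes "finite X" "set_partition X P" "B \<in> P" "i \<in> B"
  shows "(\<exists>m\<in>B. m < i) \<longleftrightarrow> i \<in> Range (Arc P)"
proof
  assume "\<exists>m\<in>B. m < i"
  let ?C = "{m\<in>B. m < i}"
  have f: "finite ?C" using sp_fin[OF assms(1-3)] by simp
  have ne: "?C \<noteq> {}" using \<open>\<exists>m\<in>B. m < i\<close> by blast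
  have "Max ?C \<in> ?C" using Max_in[OF f ne] .
  moreover have "\<forall>m\<in>B. Max ?C < m \<longrightarrow> i \<le> m"
  proof (intro ballI impI)
    fix m assume m: "m \<in> B" "Max ?C < m"
    show "i \<le> m"
    proof (rule ccontr)
      assume "\<not> i \<le> m" then have "m \<in> ?C" using m by simp
      then have "m \<le> Max ?C" using Max_ge[OF f] by blast
      then show False using m by simp
    qed
  qed
  ultimately have "(Max ?C, i) \<in> Arc P" unfolding Arc_def using assms(3,4) by blast
  then show "i \<in> Range (Arc P)" by blast
next
  assume "i \<in> Range (Arc P)"
  then obtain j B' where "B'\<in>P" "i \<in> B'" "j \<in> B'" "j < i" unfolding Arc_def by blast
  then show "\<exists>m\<in>B. m < i" using sp_uniq[OF assms(2) assms(3) \<open>B'\<in>P\<close> assms(4)] by blast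
qed

lemma card_arc:
  assumes "finite X" "set_partition X P"
  shows "card P + card (Arc P) = card X"
proof -
  have AX: "Arc P \<subseteq> X \<times> X" using arc_X[OF assms(2)] by auto
  have finA: "finite (Arc P)" using AX assms(1) finite_subset by blast
  have c1: "card (Arc P) = card (Range (Arc P))"
  proof -
    have "inj_on snd (Arc P)" using arc_inj[OF assms(2)] by (auto simp: inj_on_def)
    then show ?thesis by (metis card_image snd_eq_Range)
  qed
  have RX: "Range (Arc P) \<subseteq> X" using AX by blast
  have eq: "X - Range (Arc P) = Min ` P"
  proof
    show "X - Range (Arc P) \<subseteq> Min ` P"
    proof
      fix x assume x: "x \<in> X - Range (Arc P)"
      then obtain B where B: "B \<in> P" "x \<in> B" using sp_ex[OF assms(2)] by blast
      have "\<not>(\<exists>m\<in>B. m < x)" using not_min_iff[OF assms B] x by blast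
      then have "Min B = x" using Min_eqI[OF sp_fin[OF assms B(1)], of x] B(2) by (meson not_le)
      then have "x = Min B" by simp
      then show "x \<in> Min ` P" using B by blast
    qed
  next
    show "Min ` P \<subseteq> X - Range (Arc P)"
    proof
      fix x assume "x \<in> Min ` P"
      then obtain B where B: "B \<in> P" "x = Min B" by blast
      have fB: "finite B" using sp_fin[OF assms B(1)] .
      have xB: "x \<in> B" using Min_in[OF fB sp_ne[OF assms(2) B(1)]] B(2) by simp
      have "\<not>(\<exists>m\<in>B. m < x)" using Min_le[OF fB] B(2) by (meson not_le)
      then show "x \<in> X - Range (Arc P)" using not_min_iff[OF assms B(1) xB] sp_sub[OF assms(2) B(1)] xB by blast
    qed
  qed
  have injM: "inj_on Min P"
  proof (rule inj_onI)
    fix B C assume BC: "B \<in> P" "C \<in> P" "Min B = Min C"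
    have "Min B \<in> B" using Min_in[OF sp_fin[OF assms BC(1)] sp_ne[OF assms(2) BC(1)]] .
    moreover have "Min C \<in> C" using Min_in[OF sp_fin[OF assms BC(2)] sp_ne[OF assms(2) BC(2)]] .
    ultimately show "B = C" using sp_uniq[OF assms(2) BC(1,2)] BC(3) by metis
  qed
  have "card X = card (Range (Arc P)) + card (X - Range (Arc P))"
    using card_Diff_subset[OF finite_subset[OF RX assms(1)] RX] card_mono[OF assms(1) RX] by simp
  also have "card (X - Range (Arc P)) = card P" using eq card_image[OF injM] by simp
  finally show ?thesis using c1 by simp
qed



lemma rt_cmp:
  assumes "single_valued A" "single_valued (A\<inverse>)"
  shows "(x,y) \<in> (A \<union> A\<inverse>)\<^sup>* \<Longrightarrow> (x,y) \<in> A\<^sup>* \<or> (y,x) \<in> A\<^sup>*"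
proof (induction rule: rtrancl_induct)
  case base show ?case by simp
next
  case (step y z)
  from step.hyps(2) consider "(y,z)\<in>A" | "(z,y)\<in>A" by blast
  then show ?case
  proof cases
    case 1
    from step.IH show ?thesis
    proof
      assume "(x,y)\<in>A\<^sup>*" then show ?thesis using 1 by (meson rtrancl.rtrancl_into_rtrancl)
    next
      assume "(y,x)\<in>A\<^sup>*" moreover have "(y,z)\<in>A\<^sup>*" using 1 by blast
      ultimately show ?thesis using single_valued_confluent[OF assms(1)] by blast
    qed
  next
    case 2
    from step.IH show ?thesis
    proof
      assume xy: "(x,y)\<in>A\<^sup>*"
      have "(y,x)\<in>(A\<inverse>)\<^sup>*" using xy by (simp add: rtrancl_converse)
      moreover have "(y,z)\<in>(A\<inverse>)\<^sup>*" using 2 by blast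
      ultimately have "(x,z)\<in>(A\<inverse>)\<^sup>* \<or> (z,x)\<in>(A\<inverse>)\<^sup>*"
        using single_valued_confluent[OF assms(2)] by blast
      then show ?thesis by (auto simp: rtrancl_converse)
    next
      assume "(y,x)\<in>A\<^sup>*" then show ?thesis using 2 by (meson converse_rtrancl_into_rtrancl)
    qed
  qed
qed

lemma rt_le:
  assumes "\<And>i j. (i,j)\<in>A \<Longrightarrow> i < (j::int)"
  shows "(x,y) \<in> A\<^sup>* \<Longrightarrow> x \<le> y"
proof (induction rule: rtrancl_induct)
  case base show ?case by simp
next
  case (step y z) then show ?case using assms[of y z] by simp
qed

lemma poa:
  assumes AX: "A \<subseteq> X \<times> X" and lt: "\<And>i j. (i,j)\<in>A \<Longrightarrow> i < (j::int)"
    and sv: "single_valued A" "single_valued (A\<inverse>)"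
  shows "set_partition X (partition_of_arcs X A) \<and> Arc (partition_of_arcs X A) = A"
proof -
  define E where "E = A \<union> A\<inverse>"
  define r where "r = E\<^sup>* \<inter> X \<times> X"
  have le: "(x,y) \<in> A\<^sup>* \<Longrightarrow> x \<le> y" for x y by (rule rt_le[of A, OF lt])
  have AXX: "A \<inter> X \<times> X = A" using AX by blast
  have poa_eq: "partition_of_arcs X A = X // r" unfolding partition_of_arcs_def r_def E_def AXX ..
  have eq: "equiv X r"
  proof (rule equivI)
    show "r \<subseteq> X \<times> X" unfolding r_def by blast
    show "refl_on X r" unfolding refl_on_def r_def by blast
    have "sym E" unfolding E_def sym_def by blast
    then have "sym (E\<^sup>*)" by (rule sym_rtrancl)
    then show "sym r" unfolding r_def sym_def by blast
    show "trans r"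
    proof (rule transI)
      fix x y z assume "(x,y)\<in>r" "(y,z)\<in>r" then show "(x,z)\<in>r" unfolding r_def
        by (auto intro: rtrancl_trans)
    qed
  qed
  have cmp: "(x,y) \<in> r \<Longrightarrow> (x,y) \<in> A\<^sup>* \<or> (y,x) \<in> A\<^sup>*" for x y
    using rt_cmp[OF sv] unfolding r_def E_def by blast
  have Ar: "(x,y) \<in> A \<Longrightarrow> (x,y) \<in> r" for x y
    unfolding r_def E_def using AX by blast
  have sp: "set_partition X (X // r)"
    unfolding set_partition_def
    using in_quotient_imp_non_empty[OF eq] quotient_disj[OF eq] Union_quotient[OF eq] by blast
  have step: "(i,m) \<in> A\<^sup>* \<Longrightarrow> i \<noteq> m \<Longrightarrow> \<exists>z. (i,z)\<in>A \<and> (z,m)\<in>A\<^sup>*" for i m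
    by (meson rtranclD tranclD)
  have "Arc (X // r) = A"
  proof
    show "Arc (X // r) \<subseteq> A"
    proof
      fix p assume "p \<in> Arc (X // r)"
      then obtain i j B where p: "p = (i,j)" "B \<in> X // r" "i \<in> B" "j \<in> B" "i < j"
          "\<forall>m\<in>B. i < m \<longrightarrow> j \<le> m" unfolding Arc_def by blast
      have "(i,j) \<in> r" using in_quotient_imp_in_rel[OF eq p(2)] p(3,4) by blast
      then have c: "(i,j) \<in> A\<^sup>* \<or> (j,i) \<in> A\<^sup>*" by (rule cmp)
      have "(j,i) \<notin> A\<^sup>*" using le[of j i] p(5) by linarith
      with c have ij: "(i,j) \<in> A\<^sup>*" by blast
      have ne: "i \<noteq> j" using p(5) by simp
      obtain z where z: "(i,z)\<in>A" "(z,j)\<in>A\<^sup>*" using step[OF ij ne] by blast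
      obtain x where x: "B = r``{x}" "x \<in> X" using p(2) by (rule quotientE)
      have "(x,i) \<in> r" using x p(3) by blast
      then have "(x,z) \<in> r" using Ar[OF z(1)] eq unfolding equiv_def trans_def by blast
      then have "z \<in> B" using x by blast
      then have "j \<le> z" using p(6) lt[OF z(1)] by blast
      moreover have "z \<le> j" using le[OF z(2)] .
      ultimately have "z = j" by simp
      then show "p \<in> A" using z p by simp
    qed
  next
    show "A \<subseteq> Arc (X // r)"
    proof
      fix p assume pA: "p \<in> A"
      then obtain i j where p: "p = (i,j)" by (cases p)
      have ij: "(i,j) \<in> A" using pA p by simp
      have iX: "i \<in> X" using AX ij by blast
      let ?B = "r``{i}"
      have B: "?B \<in> X // r" using iX by (rule quotientI)
      have iB: "i \<in> ?B" using equiv_class_self[OF eq iX] .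
      have jB: "j \<in> ?B" using Ar[OF ij] by blast
      have mins: "\<forall>m\<in>?B. i < m \<longrightarrow> j \<le> m"
      proof (intro ballI impI)
        fix m assume m: "m \<in> ?B" "i < m"
        have "(i,m) \<in> r" using m by blast
        then have c: "(i,m) \<in> A\<^sup>* \<or> (m,i) \<in> A\<^sup>*" by (rule cmp)
        have "(m,i) \<notin> A\<^sup>*" using le[of m i] m(2) by linarith
        with c have im: "(i,m) \<in> A\<^sup>*" by blast
        have ne: "i \<noteq> m" using m(2) by simp
        obtain z where z: "(i,z)\<in>A" "(z,m)\<in>A\<^sup>*" using step[OF im ne] by blast
        have "z = j" using single_valuedD[OF sv(1) z(1) ij] .
        then show "j \<le> m" using le[OF z(2)] by simp
      qed
      show "p \<in> Arc (X // r)" unfolding Arc_def p using B iB jB lt[OF ij] mins by blast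
    qed
  qed
  then show ?thesis using sp poa_eq by simp
qed



lemma X_eq: "{0} \<union> pm n = {- int n..int n}"
  unfolding pm_def by auto

lemma Splus_iff: "(a, b) \<in> Splus \<longleftrightarrow> b = a + 1"
  unfolding Splus_def by auto

lemma Tplus_char:
  assumes "finite X" "set_partition X L"
  shows "Tplus X L = {(i, i + 1) | i. i \<in> X \<and> i + 1 \<in> X \<and> i \<notin> Domain (Arc L) \<and> i + 1 \<notin> Range (Arc L)}"
proof -
  have mx: "(\<exists>B\<in>L. i \<in> B \<and> (\<forall>m\<in>B. m \<le> i)) \<longleftrightarrow> i \<in> X \<and> i \<notin> Domain (Arc L)" for i
  proof
    assume "\<exists>B\<in>L. i \<in> B \<and> (\<forall>m\<in>B. m \<le> i)"
    then obtain B where B: "B \<in> L" "i \<in> B" "\<forall>m\<in>B. m \<le> i" by blast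
    have "\<not>(\<exists>m\<in>B. i < m)" using B(3) by (simp add: not_less)
    then show "i \<in> X \<and> i \<notin> Domain (Arc L)"
      using not_max_iff[OF assms B(1,2)] sp_sub[OF assms(2) B(1)] B(2) by blast
  next
    assume a: "i \<in> X \<and> i \<notin> Domain (Arc L)"
    then obtain B where B: "B \<in> L" "i \<in> B" using sp_ex[OF assms(2)] by blast
    have "\<not>(\<exists>m\<in>B. i < m)" using not_max_iff[OF assms B] a by blast
    then show "\<exists>B\<in>L. i \<in> B \<and> (\<forall>m\<in>B. m \<le> i)" using B by (auto simp: not_less)
  qed
  have mn: "(\<exists>B\<in>L. i \<in> B \<and> (\<forall>m\<in>B. i \<le> m)) \<longleftrightarrow> i \<in> X \<and> i \<notin> Range (Arc L)" for i
  proof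
    assume "\<exists>B\<in>L. i \<in> B \<and> (\<forall>m\<in>B. i \<le> m)"
    then obtain B where B: "B \<in> L" "i \<in> B" "\<forall>m\<in>B. i \<le> m" by blast
    have "\<not>(\<exists>m\<in>B. m < i)" using B(3) by (simp add: not_less)
    then show "i \<in> X \<and> i \<notin> Range (Arc L)"
      using not_min_iff[OF assms B(1,2)] sp_sub[OF assms(2) B(1)] B(2) by blast
  next
    assume a: "i \<in> X \<and> i \<notin> Range (Arc L)"
    then obtain B where B: "B \<in> L" "i \<in> B" using sp_ex[OF assms(2)] by blast
    have "\<not>(\<exists>m\<in>B. m < i)" using not_min_iff[OF assms B] a by blast
    then show "\<exists>B\<in>L. i \<in> B \<and> (\<forall>m\<in>B. i \<le> m)" using B by (auto simp: not_less)
  qed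
  show ?thesis unfolding Tplus_def mx mn by auto
qed



theorem proposition5p1:
  fixes n k :: nat and L :: "int set set"
  assumes "L \<in> NCB n" and "card L = 2 * k + 1"
  shows "plus_op ({0} \<union> pm n) L \<in> NCB n \<and>
         card (plus_op ({0} \<union> pm n) L) = 2 * (n - k) + 1"
proof -
  define X where "X = {0} \<union> pm n"
  have XI: "X = {- int n..int n}" using X_eq X_def by simp
  have finX: "finite X" by (simp add: XI)
  have cardX: "card X = 2*n+1" unfolding XI by simp
  have Xneg: "x \<in> X \<Longrightarrow> -x \<in> X" for x by (auto simp: XI)
  have spL: "set_partition X L" using assms(1) unfolding NCB_def PiB_def X_def by blast
  have symL: "(i,j)\<in>Arc L \<longleftrightarrow> (-j,-i)\<in>Arc L" for i j
    using assms(1) unfolding NCB_def PiB_def by blast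
  have ncL: "(i,k)\<in>Arc L \<Longrightarrow> (j,l)\<in>Arc L \<Longrightarrow> i<j \<Longrightarrow> j<k \<Longrightarrow> k<l \<Longrightarrow> (i,k) = (-l,-j)"
    for i j k l using assms(1) unfolding NCB_def by blast
  define \<alpha> where "\<alpha> = Arc L"
  define D where "D = Domain \<alpha>"
  define R where "R = Range \<alpha>"
  define R' where "R' = {i. i+1 \<in> R}"
  define T where "T = Tplus X L"
  have Tc: "T = {(i,i+1)| i. i\<in>X \<and> i+1 \<in>X \<and> i\<notin>D \<and> i+1 \<notin> R}"
    using Tplus_char[OF finX spL] unfolding T_def D_def R_def \<alpha>_def .
  define A where "A = (\<alpha> - Splus) \<union> T"
  have plus_eq: "plus_op X L = partition_of_arcs X A" unfolding plus_op_def A_def T_def \<alpha>_def ..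
  have \<alpha>X: "\<alpha> \<subseteq> X\<times>X" using arc_X[OF spL] \<alpha>_def by auto
  have lt\<alpha>: "(i,j)\<in>\<alpha> \<Longrightarrow> i<j" for i j using arc_lt \<alpha>_def by blast
  have AX: "A \<subseteq> X\<times>X" using \<alpha>X Tc A_def by auto
  have lt: "(i,j)\<in>A \<Longrightarrow> i<j" for i j using lt\<alpha> Tc unfolding A_def by auto
  have sv1: "single_valued A"
  proof (rule single_valuedI)
    fix x y z assume "(x,y)\<in>A" "(x,z)\<in>A"
    then show "y = z" unfolding A_def Tc D_def using arc_fun[OF spL, of x y z] \<alpha>_def by auto
  qed
  have sv2: "single_valued (A\<inverse>)"
  proof (rule single_valuedI)
    fix x y z assume "(x,y)\<in>A\<inverse>" "(x,z)\<in>A\<inverse>"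
    then have "(y,x)\<in>A" "(z,x)\<in>A" by auto
    then show "y = z" unfolding A_def Tc R_def using arc_inj[OF spL, of y x z] \<alpha>_def by auto
  qed
  have P: "set_partition X (plus_op X L) \<and> Arc (plus_op X L) = A"
    unfolding plus_eq by (rule poa[OF AX lt sv1 sv2])
  have P1: "set_partition X (plus_op X L)" and Pa: "Arc (plus_op X L) = A" using P by auto
  have symA1: "(i,j)\<in>A \<Longrightarrow> (-j,-i)\<in>A" for i j
  proof -
    assume "(i,j)\<in>A"
    then consider "(i,j)\<in>\<alpha>" "j \<noteq> i+1" | "j = i+1" "i\<in>X" "i+1\<in>X" "i\<notin>D" "i+1\<notin>R"
      unfolding A_def Tc by (auto simp: Splus_iff)
    then show "(-j,-i)\<in>A"
    proof cases
      case 1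
      have "(-j,-i)\<in>\<alpha>" using 1 symL \<alpha>_def by blast
      moreover have "(-j,-i)\<notin>Splus" using 1 by (auto simp: Splus_iff)
      ultimately show ?thesis unfolding A_def by blast
    next
      case 2
      have a: "-(i+1) \<in> X" "-(i+1)+1 \<in> X" using Xneg[OF 2(3)] Xneg[OF 2(2)] by simp_all
      have b: "-(i+1) \<notin> D"
      proof
        assume "-(i+1) \<in> D" then obtain y where "(-(i+1),y)\<in>\<alpha>" unfolding D_def by blast
        then have "(-y, i+1)\<in>\<alpha>" using symL \<alpha>_def by (metis minus_minus)
        then show False using 2 unfolding R_def by blast
      qed
      have c: "-(i+1)+1 \<notin> R"
      proof
        assume "-(i+1)+1 \<in> R" then obtain y where "(y,-i)\<in>\<alpha>" unfolding R_def by auto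
        then have "(i, -y)\<in>\<alpha>" using symL \<alpha>_def by (metis minus_minus)
        then show False using 2 unfolding D_def by blast
      qed
      have "(-(i+1), -(i+1)+1) \<in> T" unfolding Tc using a b c by blast
      then show ?thesis unfolding A_def using 2 by simp
    qed
  qed
  have symA: "(i,j)\<in>A \<longleftrightarrow> (-j,-i)\<in>A" for i j
    using symA1[of i j] symA1[of "-j" "-i"] by auto
  have ncA: "(i,k)\<in>A \<Longrightarrow> (j,l)\<in>A \<Longrightarrow> i<j \<Longrightarrow> j<k \<Longrightarrow> k<l \<Longrightarrow> (i,k) = (-l,-j)"
    for i j k l
  proof -
    assume h: "(i,k)\<in>A" "(j,l)\<in>A" "i<j" "j<k" "k<l"
    have "(i,k) \<notin> T" using h(3,4) unfolding Tc by auto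
    moreover have "(j,l) \<notin> T" using h(4,5) unfolding Tc by auto
    ultimately have "(i,k)\<in>\<alpha>" "(j,l)\<in>\<alpha>" using h(1,2) unfolding A_def by auto
    then show ?thesis using ncL h(3-5) \<alpha>_def by blast
  qed
  have symA': "(i,j) \<in> Arc (plus_op X L) \<longleftrightarrow> (-j,-i) \<in> Arc (plus_op X L)" for i j
    unfolding Pa by (rule symA)
  have ncA': "(i,k)\<in>Arc (plus_op X L) \<Longrightarrow> (j,l)\<in>Arc (plus_op X L) \<Longrightarrow> i<j \<Longrightarrow> j<k \<Longrightarrow> k<l
     \<Longrightarrow> (i,k) = (-l,-j)" for i j k l
    unfolding Pa by (rule ncA)
  have PB: "plus_op X L \<in> PiB n" unfolding PiB_def X_def[symmetric] using P1 symA' by blast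
  have NC: "plus_op X L \<in> NCB n"
    unfolding NCB_def using PB ncA' by blast
  have cL: "card L + card \<alpha> = 2*n+1" using card_arc[OF finX spL] cardX \<alpha>_def by simp
  have cP: "card (plus_op X L) + card A = 2*n+1" using card_arc[OF finX P1] Pa cardX by simp
  define Xm where "Xm = {-int n..<int n}"
  have finXm: "finite Xm" and cXm: "card Xm = 2*n" unfolding Xm_def by auto
  have fin\<alpha>: "finite \<alpha>" using finite_subset[OF \<alpha>X] finX by simp
  have DXm: "D \<subseteq> Xm"
  proof
    fix i assume "i \<in> D" then obtain j where ij: "(i,j)\<in>\<alpha>" unfolding D_def by blast
    then have "i \<in> X" "j \<in> X" "i < j" using \<alpha>X lt\<alpha>[OF ij] by auto
    then show "i \<in> Xm" unfolding Xm_def XI by auto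
  qed
  have R'Xm: "R' \<subseteq> Xm"
  proof
    fix i assume "i \<in> R'" then obtain h where ij: "(h,i+1)\<in>\<alpha>" unfolding R'_def R_def by blast
    then have "h \<in> X" "i+1 \<in> X" "h < i+1" using \<alpha>X lt\<alpha>[OF ij] by auto
    then show "i \<in> Xm" unfolding Xm_def XI by auto
  qed
  have cD: "card D = card \<alpha>"
  proof -
    have "inj_on fst \<alpha>" using arc_fun[OF spL] \<alpha>_def by (auto simp: inj_on_def)
    then show ?thesis unfolding D_def by (metis card_image fst_eq_Domain)
  qed
  have cR: "card R = card \<alpha>"
  proof -
    have "inj_on snd \<alpha>" using arc_inj[OF spL] \<alpha>_def by (auto simp: inj_on_def)
    then show ?thesis unfolding R_def by (metis card_image snd_eq_Range)
  qed
  have cR': "card R' = card \<alpha>"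
  proof -
    have "R' = (\<lambda>x. x - 1) ` R" unfolding R'_def by force
    moreover have "inj_on (\<lambda>x::int. x - 1) R" by (auto simp: inj_on_def)
    ultimately show ?thesis using cR card_image by metis
  qed
  define f where "f = (\<lambda>i::int. (i, i+1))"
  have injf: "inj_on f S" for S unfolding f_def by (auto simp: inj_on_def)
  have IntS: "\<alpha> \<inter> Splus = f ` (D \<inter> R')"
  proof
    show "\<alpha> \<inter> Splus \<subseteq> f ` (D \<inter> R')"
    proof
      fix p assume p: "p \<in> \<alpha> \<inter> Splus"
      then obtain i where i: "p = (i, i+1)" unfolding Splus_def by blast
      then have "(i,i+1) \<in> \<alpha>" using p by simp
      then have "i \<in> D \<inter> R'" unfolding D_def R_def R'_def by force
      then show "p \<in> f ` (D \<inter> R')" using i f_def by blast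
    qed
  next
    show "f ` (D \<inter> R') \<subseteq> \<alpha> \<inter> Splus"
    proof
      fix p assume "p \<in> f ` (D \<inter> R')"
      then obtain i where i: "p = (i, i+1)" "i \<in> D" "i \<in> R'" unfolding f_def by blast
      obtain j where j: "(i,j)\<in>\<alpha>" using i(2) unfolding D_def by blast
      obtain h where h: "(h,i+1)\<in>\<alpha>" using i(3) unfolding R'_def R_def by blast
      have "j = i+1"
      proof (rule ccontr)
        assume ne: "j \<noteq> i+1"
        have j1: "i+1 < j" using lt\<alpha>[OF j] ne by simp
        have "h \<noteq> i" using arc_fun[OF spL, of i j "i+1"] j h ne \<alpha>_def by auto
        then have h1: "h < i" using lt\<alpha>[OF h] by simp
        have "(h, i+1) = (-j, -i)" using ncL[of h "i+1" i j] h j h1 j1 \<alpha>_def by simp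
        then have "i + 1 = - i" by simp then show False by presburger
      qed
      then show "p \<in> \<alpha> \<inter> Splus" using i j by (auto simp: Splus_iff)
    qed
  qed
  have Teq: "T = f ` (Xm - (D \<union> R'))"
  proof -
    have "i \<in> X \<and> i+1 \<in> X \<longleftrightarrow> i \<in> Xm" for i unfolding XI Xm_def by auto
    then show ?thesis unfolding Tc f_def R'_def by auto
  qed
  have finD: "finite D" and finR': "finite R'" using DXm R'Xm finXm finite_subset by auto
  have c1: "card (\<alpha> \<inter> Splus) = card (D \<inter> R')" unfolding IntS using card_image[OF injf] .
  have c2: "card T = card Xm - card (D \<union> R')"
    unfolding Teq card_image[OF injf] using card_Diff_subset[OF _ ] DXm R'Xm finD finR'
    by (simp add: card_Diff_subset)
  have c3: "card D + card R' = card (D \<union> R') + card (D \<inter> R')" using card_Un_Int[OF finD finR'] .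
  have c4: "card (\<alpha> - Splus) = card \<alpha> - card (\<alpha> \<inter> Splus)"
    using card_Diff_subset_Int[of \<alpha> Splus] fin\<alpha> by simp
  have c5: "card (\<alpha> \<inter> Splus) \<le> card \<alpha>" using fin\<alpha> by (simp add: card_mono)
  have TS: "T \<subseteq> Splus" unfolding Tc Splus_def by blast
  have finT: "finite T" unfolding Teq using finXm by simp
  have c6: "card A = card (\<alpha> - Splus) + card T"
    unfolding A_def using TS fin\<alpha> finT by (intro card_Un_disjoint) auto
  have c7: "card (D \<union> R') \<le> card Xm" using DXm R'Xm finXm by (simp add: card_mono)
  have cA: "card A + card \<alpha> = 2*n" using c1 c2 c3 c4 c5 c6 c7 cD cR' cXm by linarith
  have kn: "k \<le> n" using cL assms(2) by linarith
  have "card (plus_op X L) = 2 * (n - k) + 1" using cA cL cP assms(2) kn by linarith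
  with NC show ?thesis unfolding X_def by blast
qed


end
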